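(* Let $\varepsilon>0$, let $G$ be a graph and let $w:V(G)\to[0,1]$ be a weight function with $w(V(G))=1$. Let $\mathcal{S}=(S_1,\dots,S_k)$ be a loosely laminar sequence of separations of $G$ such that every $S\in\mathcal{S}$ is $\varepsilon$-skewed, with an anchor $v_i\in C(S_i)$ chosen for each $i$, such that every vertex of $G$ is the anchor of at most one separation in $\mathcal{S}$. Let $\beta_{\mathcal{S}}$ be the central bag for $\mathcal{S}$. Then: (i) $C(S)\subseteq\beta_{\mathcal{S}}$ for every $S\in\mathcal{S}$; (ii) if $G$ is connected and $G[C(S)]$ is connected for every $S\in\mathcal{S}$, then $G[\beta_{\mathcal{S}}]$ is connected; (iii) $w_{\mathcal{S}}(\beta_{\mathcal{S}})=1$ and $\max_{v\in\beta_{\mathcal{S}}}w_{\mathcal{S}}(v)\le \max_{v\in V(G)}w(v)+\varepsilon$.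
   Context: For $X\subseteq V(G)$, $w(X)=\sum_{x\in X}w(x)$. A separation of $G$ is a triple $S=(A,C,B)$ of pairwise disjoint sets with $A\cup C\cup B=V(G)$ and $A$ anticomplete to $B$ (no edges between them); write $A(S)=A$, $C(S)=C$, $B(S)=B$. A separation $(A,C,B)$ is $\varepsilon$-skewed if $w(A)<\varepsilon$ (the paper's convention: whenever a separation is $\varepsilon$-skewed, it is labeled so that $w(A)<\varepsilon$). Two separations $S_1,S_2$ are loosely non-crossing if $A(S_1)\cap C(S_2)=\emptyset$ and $A(S_2)\cap C(S_1)=\emptyset$; a sequence of separations is loosely laminar if every two of its members are loosely non-crossing. The central bag for $\mathcal{S}$ is $\beta_{\mathcal{S}}=\bigcap_{S\in\mathcal{S}}(B(S)\cup C(S))$. Writing $A_i=A(S_i)$, the weight function $w_{\mathcal{S}}$ on $\beta_{\mathcal{S}}$ is defined by $w_{\mathcal{S}}(v)=w(v)+w(A_i\setminus\bigcup_{1\le j<i}A_j)$ if $v=v_i$ is the anchor of $S_i$, and $w_{\mathcal{S}}(v)=w(v)$ otherwise; $w_{\mathcal{S}}(X)=\sum_{x\in X}w_{\mathcal{S}}(x)$. *)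

theory Defs
  imports Complex_Main
begin

definition graph :: "'a set \<Rightarrow> ('a \<Rightarrow> 'a \<Rightarrow> bool) \<Rightarrow> bool" where
  "graph V E \<longleftrightarrow> finite V \<and> (\<forall>x y. E x y \<longrightarrow> x \<in> V \<and> y \<in> V)
     \<and> (\<forall>x y. E x y \<longrightarrow> E y x) \<and> (\<forall>x. \<not> E x x)"

definition connected_induced :: "('a \<Rightarrow> 'a \<Rightarrow> bool) \<Rightarrow> 'a set \<Rightarrow> bool" where
  "connected_induced E X \<longleftrightarrow> X \<noteq> {} \<and>
     (\<forall>x\<in>X. \<forall>y\<in>X. (\<lambda>u v. u \<in> X \<and> v \<in> X \<and> E u v)\<^sup>*\<^sup>* x y)"

definition wsum :: "('a \<Rightarrow> real) \<Rightarrow> 'a set \<Rightarrow> real" where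
  "wsum w X = (\<Sum>x\<in>X. w x)"

type_synonym 'a separation = "'a set \<times> 'a set \<times> 'a set"

definition sepA :: "'a separation \<Rightarrow> 'a set" where "sepA S = fst S"
definition sepC :: "'a separation \<Rightarrow> 'a set" where "sepC S = fst (snd S)"
definition sepB :: "'a separation \<Rightarrow> 'a set" where "sepB S = snd (snd S)"

definition is_separation :: "'a set \<Rightarrow> ('a \<Rightarrow> 'a \<Rightarrow> bool) \<Rightarrow> 'a separation \<Rightarrow> bool" where
  "is_separation V E S \<longleftrightarrow>
     sepA S \<inter> sepC S = {} \<and> sepA S \<inter> sepB S = {} \<and> sepC S \<inter> sepB S = {}
     \<and> sepA S \<union> sepC S \<union> sepB S = V
     \<and> (\<forall>a\<in>sepA S. \<forall>b\<in>sepB S. \<not> E a b)"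

definition skewed :: "('a \<Rightarrow> real) \<Rightarrow> real \<Rightarrow> 'a separation \<Rightarrow> bool" where
  "skewed w eps S \<longleftrightarrow> wsum w (sepA S) < eps"

definition loosely_non_crossing :: "'a separation \<Rightarrow> 'a separation \<Rightarrow> bool" where
  "loosely_non_crossing S1 S2 \<longleftrightarrow> sepA S1 \<inter> sepC S2 = {} \<and> sepA S2 \<inter> sepC S1 = {}"

definition loosely_laminar :: "(nat \<Rightarrow> 'a separation) \<Rightarrow> nat \<Rightarrow> bool" where
  "loosely_laminar S k \<longleftrightarrow> (\<forall>i\<in>{1..k}. \<forall>j\<in>{1..k}. loosely_non_crossing (S i) (S j))"

definition central_bag :: "'a set \<Rightarrow> (nat \<Rightarrow> 'a separation) \<Rightarrow> nat \<Rightarrow> 'a set" where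
  "central_bag V S k = {v\<in>V. \<forall>i\<in>{1..k}. v \<in> sepB (S i) \<union> sepC (S i)}"

definition w_seq :: "('a \<Rightarrow> real) \<Rightarrow> (nat \<Rightarrow> 'a separation) \<Rightarrow> nat \<Rightarrow> (nat \<Rightarrow> 'a) \<Rightarrow> 'a \<Rightarrow> real" where
  "w_seq w S k anc v =
     (if \<exists>i\<in>{1..k}. anc i = v
      then (let i = (THE i. i \<in> {1..k} \<and> anc i = v) in
              w v + wsum w (sepA (S i) - (\<Union>j\<in>{1..<i}. sepA (S j))))
      else w v)"

end

theory Submission
  imports Defs
begin

lemma sum_diff_prefix:
  shows "(\<forall>i\<in>{1..(n::nat)}. finite (f i)) \<Longrightarrow> (\<Sum>i\<in>{1..n}. sum w (f i - (\<Union>j\<in>{1..<i}. f j))) = sum w (\<Union>i\<in>{1..n}. f i)"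
proof (induction n)
  case 0
  then show ?case by simp
next
  case (Suc n)
  have e1: "{1..Suc n} = insert (Suc n) {1..n}" by auto
  have e2: "{1..<Suc n} = {1..n}" by auto
  have e3: "(\<Union>i\<in>{1..Suc n}. f i) = (\<Union>i\<in>{1..n}. f i) \<union> (f (Suc n) - (\<Union>j\<in>{1..n}. f j))"
    by (simp only: e1 UN_insert) blast
  have fin: "finite (\<Union>i\<in>{1..n}. f i)" using Suc.prems by auto
  have "sum w (\<Union>i\<in>{1..Suc n}. f i) = sum w (\<Union>i\<in>{1..n}. f i) + sum w (f (Suc n) - (\<Union>j\<in>{1..n}. f j))"
    unfolding e3 by (rule sum.union_disjoint) (use fin Suc.prems in auto)
  then show ?case using Suc by (simp add: e1 e2 atLeastLessThanSuc_atLeastAtMost)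
qed

lemma reroute:
  assumes sym: "\<forall>x y. E x y \<longrightarrow> E y x"
    and noAB: "\<forall>a\<in>A. \<forall>b\<in>B. \<not> E a b"
    and WV: "W \<subseteq> A \<union> C \<union> B"
    and Ccon: "\<forall>c\<in>C. \<forall>c'\<in>C. (\<lambda>u v. u \<in> C \<and> v \<in> C \<and> E u v)\<^sup>*\<^sup>* c c'"
    and CU: "C \<subseteq> U" and WU: "W - A \<subseteq> U"
    and x: "x \<notin> A"
    and path: "(\<lambda>u v. u \<in> W \<and> v \<in> W \<and> E u v)\<^sup>*\<^sup>* x z"
  shows "(z \<in> A \<and> (\<exists>c\<in>C. (\<lambda>u v. u \<in> U \<and> v \<in> U \<and> E u v)\<^sup>*\<^sup>* x c))
       \<or> (z \<notin> A \<and> (\<lambda>u v. u \<in> U \<and> v \<in> U \<and> E u v)\<^sup>*\<^sup>* x z)"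
  using path
proof (induction rule: rtranclp_induct)
  case base
  then show ?case using x by simp
next
  case (step y z)
  let ?RU = "(\<lambda>u v. u \<in> U \<and> v \<in> U \<and> E u v)"
  have yW: "y \<in> W" and zW: "z \<in> W" and Eyz: "E y z" using step by auto
  show ?case
  proof (cases "y \<in> A")
    case yA: True
    then obtain c where c: "c \<in> C" "?RU\<^sup>*\<^sup>* x c" using step by auto
    show ?thesis
    proof (cases "z \<in> A")
      case True then show ?thesis using c by auto
    next
      case False
      have "z \<notin> B" using noAB yA Eyz by auto
      hence zC: "z \<in> C" using zW WV False by auto
      have "(\<lambda>u v. u \<in> C \<and> v \<in> C \<and> E u v)\<^sup>*\<^sup>* c z" using Ccon c zC by auto
      hence "?RU\<^sup>*\<^sup>* c z"
        by (rule rtranclp_mono[THEN predicate2D, rotated]) (use CU in auto)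
      then show ?thesis using False c by auto
    qed
  next
    case yA: False
    then have r: "?RU\<^sup>*\<^sup>* x y" using step by auto
    show ?thesis
    proof (cases "z \<in> A")
      case True
      have "y \<notin> B" using noAB True Eyz sym by blast
      hence "y \<in> C" using yW WV yA by auto
      then show ?thesis using True r by auto
    next
      case False
      have "y \<in> U" "z \<in> U" using WU yW zW yA False by auto
      then have "?RU\<^sup>*\<^sup>* x z" using r Eyz by (simp add: rtranclp.rtrancl_into_rtrancl)
      then show ?thesis using False by auto
    qed
  qed
qed

theorem lemma3p2:
  fixes V :: "'a set" and E :: "'a \<Rightarrow> 'a \<Rightarrow> bool" and w :: "'a \<Rightarrow> real"
    and eps :: real and k :: nat and S :: "nat \<Rightarrow> 'a separation" and anc :: "nat \<Rightarrow> 'a"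
  assumes eps: "eps > 0"
    and G: "graph V E"
    and w01: "\<forall>v\<in>V. 0 \<le> w v \<and> w v \<le> 1"
    and wtot: "wsum w V = 1"
    and seps: "\<forall>i\<in>{1..k}. is_separation V E (S i)"
    and lam: "loosely_laminar S k"
    and skew: "\<forall>i\<in>{1..k}. skewed w eps (S i)"
    and anc: "\<forall>i\<in>{1..k}. anc i \<in> sepC (S i)"
    and anc_inj: "inj_on anc {1..k}"
  shows "(\<forall>i\<in>{1..k}. sepC (S i) \<subseteq> central_bag V S k)
    \<and> ((connected_induced E V \<and> (\<forall>i\<in>{1..k}. connected_induced E (sepC (S i))))
         \<longrightarrow> connected_induced E (central_bag V S k))
    \<and> wsum (w_seq w S k anc) (central_bag V S k) = 1
    \<and> (\<forall>v\<in>central_bag V S k. w_seq w S k anc v \<le> Max (w ` V) + eps)"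
proof -
  define \<beta> where "\<beta> = central_bag V S k"
  have finV: "finite V" and sym: "\<forall>x y. E x y \<longrightarrow> E y x" using G unfolding graph_def by auto
  have sepi: "sepA (S i) \<inter> sepC (S i) = {} \<and> sepA (S i) \<inter> sepB (S i) = {} \<and> sepC (S i) \<inter> sepB (S i) = {}
     \<and> sepA (S i) \<union> sepC (S i) \<union> sepB (S i) = V
     \<and> (\<forall>a\<in>sepA (S i). \<forall>b\<in>sepB (S i). \<not> E a b)" if "i \<in> {1..k}" for i
    using seps that unfolding is_separation_def by blast
  have lnc: "sepA (S i) \<inter> sepC (S j) = {}" if "i \<in> {1..k}" "j \<in> {1..k}" for i j
    using lam that unfolding loosely_laminar_def loosely_non_crossing_def by blast
  have P1: "sepC (S i) \<subseteq> \<beta>" if i: "i \<in> {1..k}" for i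
  proof
    fix v assume v: "v \<in> sepC (S i)"
    have "v \<in> V" using sepi[OF i] v by blast
    moreover have "v \<in> sepB (S j) \<union> sepC (S j)" if j: "j \<in> {1..k}" for j
    proof -
      have "v \<notin> sepA (S j)" using lnc[OF j i] v by blast
      moreover have "v \<in> sepA (S j) \<union> sepC (S j) \<union> sepB (S j)" using sepi[OF j] \<open>v \<in> V\<close> by blast
      ultimately show ?thesis by blast
    qed
    ultimately show "v \<in> \<beta>" unfolding \<beta>_def central_bag_def by blast
  qed
  have \<beta>V: "\<beta> \<subseteq> V" unfolding \<beta>_def central_bag_def by auto
  have \<beta>A: "v \<notin> sepA (S i)" if "v \<in> \<beta>" "i \<in> {1..k}" for v i
    using that sepi[OF that(2)] unfolding \<beta>_def central_bag_def by blast
  have Vcov: "V = \<beta> \<union> (\<Union>i\<in>{1..k}. sepA (S i))"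
  proof
    show "V \<subseteq> \<beta> \<union> (\<Union>i\<in>{1..k}. sepA (S i))"
    proof
      fix v assume v: "v \<in> V"
      show "v \<in> \<beta> \<union> (\<Union>i\<in>{1..k}. sepA (S i))"
      proof (cases "v \<in> \<beta>")
        case False
        then obtain i where i: "i \<in> {1..k}" "v \<notin> sepB (S i) \<union> sepC (S i)"
          using v unfolding \<beta>_def central_bag_def by blast
        then have "v \<in> sepA (S i)" using sepi[OF i(1)] v by blast
        then show ?thesis using i by blast
      qed simp
    qed
    show "\<beta> \<union> (\<Union>i\<in>{1..k}. sepA (S i)) \<subseteq> V" using \<beta>V sepi by blast
  qed
  have P2: "connected_induced E \<beta>"
    if conV: "connected_induced E V" and conC: "\<forall>i\<in>{1..k}. connected_induced E (sepC (S i))"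
  proof -
    have claim: "\<forall>x\<in>\<beta>. \<forall>y\<in>\<beta>. (\<lambda>u v. u \<in> \<beta> \<union> (\<Union>i\<in>I. sepA (S i)) \<and> v \<in> \<beta> \<union> (\<Union>i\<in>I. sepA (S i)) \<and> E u v)\<^sup>*\<^sup>* x y
        \<longrightarrow> (\<lambda>u v. u \<in> \<beta> \<and> v \<in> \<beta> \<and> E u v)\<^sup>*\<^sup>* x y"
      if "finite I" "I \<subseteq> {1..k}" for I
      using that
    proof (induction I rule: finite_induct)
      case empty
      then show ?case by simp
    next
      case (insert i J)
      have i: "i \<in> {1..k}" using insert by auto
      show ?case
      proof (intro ballI impI)
        fix x y assume x: "x \<in> \<beta>" and y: "y \<in> \<beta>"
          and p: "(\<lambda>u v. u \<in> \<beta> \<union> (\<Union>i\<in>insert i J. sepA (S i)) \<and> v \<in> \<beta> \<union> (\<Union>i\<in>insert i J. sepA (S i)) \<and> E u v)\<^sup>*\<^sup>* x y"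
        have "(y \<in> sepA (S i) \<and> (\<exists>c\<in>sepC (S i). (\<lambda>u v. u \<in> \<beta> \<union> (\<Union>i\<in>J. sepA (S i)) \<and> v \<in> \<beta> \<union> (\<Union>i\<in>J. sepA (S i)) \<and> E u v)\<^sup>*\<^sup>* x c))
          \<or> (y \<notin> sepA (S i) \<and> (\<lambda>u v. u \<in> \<beta> \<union> (\<Union>i\<in>J. sepA (S i)) \<and> v \<in> \<beta> \<union> (\<Union>i\<in>J. sepA (S i)) \<and> E u v)\<^sup>*\<^sup>* x y)"
        proof (rule reroute[OF sym, of _ "sepB (S i)" _ "sepC (S i)"])
          show "\<forall>a\<in>sepA (S i). \<forall>b\<in>sepB (S i). \<not> E a b" using sepi[OF i] by blast
          show "\<beta> \<union> (\<Union>i\<in>insert i J. sepA (S i)) \<subseteq> sepA (S i) \<union> sepC (S i) \<union> sepB (S i)"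
            using sepi[OF i] Vcov insert.prems by auto
          show "\<forall>c\<in>sepC (S i). \<forall>c'\<in>sepC (S i). (\<lambda>u v. u \<in> sepC (S i) \<and> v \<in> sepC (S i) \<and> E u v)\<^sup>*\<^sup>* c c'"
            using conC i unfolding connected_induced_def by blast
          show "sepC (S i) \<subseteq> \<beta> \<union> (\<Union>i\<in>J. sepA (S i))" using P1[OF i] by blast
          show "\<beta> \<union> (\<Union>i\<in>insert i J. sepA (S i)) - sepA (S i) \<subseteq> \<beta> \<union> (\<Union>i\<in>J. sepA (S i))" by auto
          show "x \<notin> sepA (S i)" using \<beta>A[OF x i] .
        qed (rule p)
        then have "(\<lambda>u v. u \<in> \<beta> \<union> (\<Union>i\<in>J. sepA (S i)) \<and> v \<in> \<beta> \<union> (\<Union>i\<in>J. sepA (S i)) \<and> E u v)\<^sup>*\<^sup>* x y"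
          using \<beta>A[OF y i] by blast
        then show "(\<lambda>u v. u \<in> \<beta> \<and> v \<in> \<beta> \<and> E u v)\<^sup>*\<^sup>* x y" using insert x y by blast
      qed
    qed
    have all: "\<forall>x\<in>\<beta>. \<forall>y\<in>\<beta>. (\<lambda>u v. u \<in> \<beta> \<union> (\<Union>i\<in>{1..k}. sepA (S i)) \<and> v \<in> \<beta> \<union> (\<Union>i\<in>{1..k}. sepA (S i)) \<and> E u v)\<^sup>*\<^sup>* x y
        \<longrightarrow> (\<lambda>u v. u \<in> \<beta> \<and> v \<in> \<beta> \<and> E u v)\<^sup>*\<^sup>* x y"
      using claim[of "{1..k}"] by simp
    have ne: "\<beta> \<noteq> {}"
    proof (cases "k = 0")
      case True
      then have "\<beta> = V" unfolding \<beta>_def central_bag_def by auto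
      then show ?thesis using conV unfolding connected_induced_def by auto
    next
      case False
      then have "1 \<in> {1..k}" by auto
      then show ?thesis using P1 anc by blast
    qed
    show ?thesis unfolding connected_induced_def
    proof (intro conjI ne ballI)
      fix x y assume "x \<in> \<beta>" "y \<in> \<beta>"
      moreover have "(\<lambda>u v. u \<in> V \<and> v \<in> V \<and> E u v)\<^sup>*\<^sup>* x y"
        using conV \<open>x \<in> \<beta>\<close> \<open>y \<in> \<beta>\<close> \<beta>V unfolding connected_induced_def by blast
      then have "(\<lambda>u v. u \<in> \<beta> \<union> (\<Union>i\<in>{1..k}. sepA (S i)) \<and> v \<in> \<beta> \<union> (\<Union>i\<in>{1..k}. sepA (S i)) \<and> E u v)\<^sup>*\<^sup>* x y"
        unfolding Vcov .
      ultimately show "(\<lambda>u v. u \<in> \<beta> \<and> v \<in> \<beta> \<and> E u v)\<^sup>*\<^sup>* x y" using all by blast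
    qed
  qed
  define D where "D i = sepA (S i) - (\<Union>j\<in>{1..<i}. sepA (S j))" for i
  have THEi: "(THE i. i \<in> {1..k} \<and> anc i = anc i0) = i0" if "i0 \<in> {1..k}" for i0
    using anc_inj that by (intro the_equality) (auto dest: inj_onD)
  have ws_anc: "w_seq w S k anc (anc i) = w (anc i) + sum w (D i)" if "i \<in> {1..k}" for i
    using that THEi[OF that] unfolding w_seq_def D_def wsum_def by auto
  have ws_other: "w_seq w S k anc v = w v" if "v \<notin> anc ` {1..k}" for v
    using that unfolding w_seq_def by auto
  have finA: "finite (sepA (S i))" if "i \<in> {1..k}" for i
    using sepi[OF that] finV by (metis finite_Un)
  have P3: "wsum (w_seq w S k anc) \<beta> = 1"
  proof -
    have ancb: "anc ` {1..k} \<subseteq> \<beta>" using P1 anc by blast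
    have finb: "finite \<beta>" using \<beta>V finV finite_subset by blast
    have "wsum (w_seq w S k anc) \<beta> = (\<Sum>v\<in>\<beta>. w v + (if v \<in> anc ` {1..k} then w_seq w S k anc v - w v else 0))"
      unfolding wsum_def using ws_other by (intro sum.cong) auto
    also have "\<dots> = sum w \<beta> + (\<Sum>v\<in>\<beta>. if v \<in> anc ` {1..k} then w_seq w S k anc v - w v else 0)"
      by (simp add: sum.distrib)
    also have "(\<Sum>v\<in>\<beta>. if v \<in> anc ` {1..k} then w_seq w S k anc v - w v else 0)
        = (\<Sum>v\<in>anc ` {1..k}. w_seq w S k anc v - w v)"
      using sum.inter_restrict[OF finb, symmetric] ancb
      by (simp add: Int_absorb1 sum.If_cases[OF finb])
    also have "\<dots> = (\<Sum>i\<in>{1..k}. w_seq w S k anc (anc i) - w (anc i))"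
      by (rule sum.reindex[OF anc_inj, unfolded comp_def])
    also have "\<dots> = (\<Sum>i\<in>{1..k}. sum w (D i))" using ws_anc by (intro sum.cong) auto
    also have "\<dots> = sum w (\<Union>i\<in>{1..k}. sepA (S i))"
      unfolding D_def by (rule sum_diff_prefix) (use finA in auto)
    finally have "wsum (w_seq w S k anc) \<beta> = sum w \<beta> + sum w (\<Union>i\<in>{1..k}. sepA (S i))" .
    also have "\<dots> = sum w V"
      by (subst Vcov, rule sum.union_disjoint[symmetric]) (use finb finA \<beta>A in auto)
    finally show ?thesis using wtot unfolding wsum_def by simp
  qed
  have P4: "w_seq w S k anc v \<le> Max (w ` V) + eps" if v: "v \<in> \<beta>" for v
  proof -
    have vV: "v \<in> V" using v \<beta>V by blast
    have wm: "w v \<le> Max (w ` V)" using finV vV by auto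
    show ?thesis
    proof (cases "v \<in> anc ` {1..k}")
      case True
      then obtain i where i: "i \<in> {1..k}" and vi: "v = anc i" by auto
      have "sum w (D i) \<le> sum w (sepA (S i))"
        unfolding D_def by (rule sum_mono2) (use finA[OF i] sepi[OF i] w01 in auto)
      also have "\<dots> < eps" using skew i unfolding skewed_def wsum_def by auto
      finally show ?thesis using ws_anc[OF i] vi wm by simp
    next
      case False
      then show ?thesis using ws_other wm eps by simp
    qed
  qed
  show ?thesis using P1 P2 P3 P4 unfolding \<beta>_def by blast
qed

end
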